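(* For every $w\in\mathfrak B$, $$\langle\nabla R(w),\,w-w^\star\rangle\ge\frac1{10}\|w-w^\star\|^2.$$
   Context: $\|w^\star\|=1$. $R$ is the population risk of learning a ReLU unit, whose gradient at $w\ne0$ is $\nabla R(w)=\frac12(w-w^\star)+\frac1{2\pi}(\theta w^\star-\hat w\sin\theta)$, where $\hat w=w/\|w\|$ and $\theta\in[0,\pi]$ is the angle between $w$ and $w^\star$ ($\cos\theta=\hat w^\top w^\star$). $\mathfrak B=\{w:w^\top w^\star\ge1/\sqrt d\}\cap\{w:\|w\|\le2\}$. *)

theory Defs
  imports "HOL-Analysis.Analysis"
begin

text \<open>Angle between w and w* (w* a unit vector), in [0,pi].\<close>
definition relu_angle :: "'a::euclidean_space \<Rightarrow> 'a \<Rightarrow> real" where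
  "relu_angle wstar w = arccos ((w /\<^sub>R norm w) \<bullet> wstar)"

text \<open>Gradient of the population risk of learning a ReLU unit, for w \<noteq> 0.\<close>
definition relu_grad :: "'a::euclidean_space \<Rightarrow> 'a \<Rightarrow> 'a" where
  "relu_grad wstar w =
     (let \<theta> = relu_angle wstar w; what = w /\<^sub>R norm w in
      (1/2) *\<^sub>R (w - wstar) + (1 / (2*pi)) *\<^sub>R (\<theta> *\<^sub>R wstar - sin \<theta> *\<^sub>R what))"

definition regionB :: "'a::euclidean_space \<Rightarrow> 'a set" where
  "regionB wstar = {w. w \<bullet> wstar \<ge> 1 / sqrt (real DIM('a))} \<inter> {w. norm w \<le> 2}"

end

theory Submission
  imports Defs
begin

lemma key_case1:
  fixes r c s :: real
  assumes "0 < r" "r \<le> 2" "0 < c" "c \<le> 1" "0 \<le> s" "s^2 = 1 - c^2" "r*c \<ge> 1"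
  shows "2.4*((r-c)^2 + s^2) \<ge> s*(r+1)*(1-c)"
proof -
  have "r*c \<le> 2*c" using assms by (intro mult_right_mono) auto
  hence c2: "c \<ge> 1/2" using assms by linarith
  have s1: "s \<le> 1" proof -
    have "s^2 \<le> 1^2" using assms by simp
    thus ?thesis using power2_le_imp_le by (metis zero_le_one)
  qed
  have u: "(1-c)*(1+c) = s^2" using assms by (simp add: power2_eq_square algebra_simps)
  have "1 - c \<le> 2/3* s^2"
  proof -
    have "(1-c)*(3/2) \<le> (1-c)*(1+c)" using c2 assms by (intro mult_left_mono) auto
    hence "(1-c)*(3/2) \<le> s^2" using u by simp
    thus ?thesis by (simp add: algebra_simps)
  qed
  hence "s*(r+1)*(1-c) \<le> s*(r+1)*(2/3* s^2)" using assms(1,5) by (intro mult_left_mono) auto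
  also have "\<dots> \<le> s*3*(2/3* s^2)" using assms(1,2,5) by (intro mult_right_mono mult_left_mono) (auto simp: power2_eq_square)
  also have "\<dots> = 2* s^2 * s" by (simp add: power2_eq_square)
  also have "\<dots> \<le> 2* s^2 *1" using s1 by (intro mult_left_mono) auto
  also have "\<dots> \<le> 2.4*((r-c)^2 + s^2)" by simp
  finally show ?thesis .
qed

lemma key_case2:
  fixes r c s :: real
  assumes "0 < r" "r \<le> 2" "0 < c" "c \<le> 1" "0 \<le> s" "s^2 = 1 - c^2"
  shows "2.4*(1+c)*((r-c)^2 + s^2) \<ge> s*(1-c)*(r+2+c)"
proof -
  define a where "a = r - c"
  have s1: "s \<le> 1" proof -
    have "s^2 \<le> 1^2" using assms by simp
    thus ?thesis using power2_le_imp_le by (metis zero_le_one)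
  qed
  have u: "(1-c)*(1+c) = s^2" using assms by (simp add: power2_eq_square algebra_simps)
  have rhs0: "s*(1-c)*(r+2+c) = s*(1-c)*a + 2 * s*((1-c)*(1+c))" by (simp add: a_def algebra_simps)
  have rhs: "s*(1-c)*(r+2+c) = s*(1-c)*a + 2* s^2 * s" unfolding rhs0 u by (simp add: power2_eq_square)
  have t1: "2* s^2 * s \<le> 2* s^2 * 1" using s1 by (intro mult_left_mono) auto
  have t2: "2.4*(1+c)* s^2 \<ge> 2.4* s^2" using assms(3) by (intro mult_right_mono) auto
  have t3: "2.4*(1+c)*a^2 \<ge> 2.4*a^2" using assms(3) by (intro mult_right_mono) auto
  have t4: "s*(1-c)*a \<le> s*\<bar>a\<bar>"
  proof -
    have "s*(1-c)*a \<le> \<bar>s*(1-c)*a\<bar>" by simp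
    also have "\<dots> = s*(1-c)*\<bar>a\<bar>" using assms(4,5) by (simp add: abs_mult)
    also have "\<dots> \<le> s*\<bar>a\<bar>"
    proof -
      have "s*(1-c) \<le> s*1" using assms(3,5) by (intro mult_left_mono) auto
      hence "s*(1-c)*\<bar>a\<bar> \<le> s*1*\<bar>a\<bar>" by (intro mult_right_mono) auto
      thus ?thesis by simp
    qed
    finally show ?thesis .
  qed
  have t5: "s*\<bar>a\<bar> \<le> 2.4*a^2 + 0.4* s^2"
  proof -
    have "0 \<le> 2.4*(\<bar>a\<bar> - s/4.8)^2" by simp
    moreover have "\<bar>a\<bar>^2 = a^2" by simp
    ultimately have "s*\<bar>a\<bar> \<le> 2.4*a^2 + (5/48) * s^2" by (simp add: power2_eq_square algebra_simps)
    moreover have "0 \<le> s^2" by simp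
    ultimately show ?thesis by linarith
  qed
  have lhs: "2.4*(1+c)*((r-c)^2 + s^2) = 2.4*(1+c)*a^2 + 2.4*(1+c)* s^2" unfolding a_def by (simp only: distrib_left)
  show ?thesis unfolding lhs rhs using t1 t2 t3 t4 t5 by linarith
qed

lemma key_real:
  fixes r c s T :: real
  assumes "0 < r" "r \<le> 2" "0 < c" "c \<le> 1" "0 \<le> s" "s^2 = 1 - c^2"
    and "s \<le> T" "T*(1+c) \<le> 2* s"
  shows "0.8*pi*((r-c)^2 + s^2) + T*(r*c-1) - s*(r-c) \<ge> 0"
proof -
  have pi3: "0.8*pi \<ge> 2.4" using pi_gt3 by simp
  have D0: "(r-c)^2 + s^2 \<ge> 0" by simp
  have Dpi: "0.8*pi*((r-c)^2 + s^2) \<ge> 2.4*((r-c)^2 + s^2)"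
    using mult_right_mono[OF pi3 D0] by simp
  show ?thesis
  proof (cases "r*c \<ge> 1")
    case True
    have "T*(r*c-1) \<ge> s*(r*c-1)" using True assms by (intro mult_right_mono) auto
    moreover have "s*(r*c-1) - s*(r-c) = - (s*(r+1)*(1-c))" by (simp add: algebra_simps)
    moreover note key_case1[OF assms(1-6) True]
    ultimately show ?thesis using Dpi by linarith
  next
    case False
    have "T*(1+c)*(1-r*c) \<le> 2* s*(1-r*c)" using False assms by (intro mult_right_mono) auto
    hence A: "(1+c)*(T*(r*c-1)) \<ge> 2* s*(r*c-1)" by (simp add: algebra_simps)
    have B: "2* s*(r*c-1) - (1+c)*(s*(r-c)) = - (s*(1-c)*(r+2+c))" by (simp add: algebra_simps)
    have C: "(1+c)*(0.8*pi*((r-c)^2 + s^2)) \<ge> (1+c)*(2.4*((r-c)^2 + s^2))"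
      using Dpi assms by (intro mult_left_mono) auto
    have E: "(1+c)*(2.4*((r-c)^2 + s^2)) = 2.4*(1+c)*((r-c)^2 + s^2)" by (simp only: mult.assoc mult.left_commute)
    have F: "(1+c)*(0.8*pi*((r-c)^2 + s^2) + T*(r*c-1) - s*(r-c)) = (1+c)*(0.8*pi*((r-c)^2 + s^2)) + (1+c)*(T*(r*c-1)) - (1+c)*(s*(r-c))"
      by (simp only: distrib_left right_diff_distrib)
    have "(1+c)*(0.8*pi*((r-c)^2 + s^2) + T*(r*c-1) - s*(r-c)) \<ge> 0"
      unfolding F using A B C E key_case2[OF assms(1-6)] by linarith
    thus ?thesis using assms(3) by (simp add: zero_le_mult_iff)
  qed
qed


theorem mainTheorem15:
  fixes wstar w :: "'a::euclidean_space"
  assumes "norm wstar = 1"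
    and "w \<in> regionB wstar"
  shows "relu_grad wstar w \<bullet> (w - wstar) \<ge> (1/10) * (norm (w - wstar))\<^sup>2"
proof -
  have ws: "w \<bullet> wstar \<ge> 1 / sqrt (real DIM('a))" and w2: "norm w \<le> 2"
    using assms(2) unfolding regionB_def by auto
  have pos: "w \<bullet> wstar > 0" using ws by (smt (verit) divide_pos_pos real_sqrt_gt_zero DIM_positive of_nat_0_less_iff)
  define r where "r = norm w"
  have wnz: "w \<noteq> 0" using pos by auto
  have r0: "r > 0" using wnz r_def by simp
  define c where "c = (w /\<^sub>R norm w) \<bullet> wstar"
  have c_eq: "c = (w \<bullet> wstar) / r" unfolding c_def r_def by (simp add: divide_inverse mult.commute)
  have c0: "c > 0" using c_eq pos r0 by simp
  have "\<bar>w \<bullet> wstar\<bar> \<le> r" using Cauchy_Schwarz_ineq2[of w wstar] assms(1) r_def by simp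
  hence c1: "c \<le> 1" using c_eq r0 by (simp add: divide_le_eq_1)
  define T where "T = arccos c"
  define s where "s = sin T"
  have hT: "relu_angle wstar w = T" unfolding relu_angle_def T_def c_def by simp
  have cosT: "cos T = c" unfolding T_def using c0 c1 by simp
  have T0: "0 \<le> T" and Tpi2: "T \<le> pi/2" unfolding T_def using c0 c1 arccos_lbound arccos_le_pi2 by auto
  have s0: "s \<ge> 0" unfolding s_def using T0 Tpi2 by (intro sin_ge_zero) auto
  have s2: "s^2 = 1 - c^2" unfolding s_def using cosT sin_cos_squared_add[of T] by simp
  have sT: "s \<le> T" unfolding s_def using sin_x_le_x T0 by simp
  have Tup: "T*(1+c) \<le> 2 * s"
  proof -
    have tanh: "tan (T/2) = s / (c + 1)" using tan_half[of "T/2"] cosT unfolding s_def by simp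
    have at: "arctan (tan (T/2)) = T/2" proof (rule arctan_tan)
      show "- (pi/2) < T/2" using T0 pi_gt_zero by linarith
      show "T/2 < pi/2" using Tpi2 pi_gt_zero by linarith
    qed
    have "tan (T/2) \<ge> 0" unfolding tanh using s0 c0 by simp
    hence "T/2 \<le> tan (T/2)" using arctan_le_self[of "tan (T/2)"] at by linarith
    hence "T/2 \<le> s/(c+1)" using tanh by simp
    thus ?thesis using c0 by (simp add: field_simps)
  qed
  have key: "0.8*pi*((r-c)^2 + s^2) + T*(r*c-1) - s*(r-c) \<ge> 0"
    using key_real[OF r0 _ c0 c1 s0 s2 sT Tup] w2 r_def by blast
  have ww: "wstar \<bullet> wstar = 1" using power2_norm_eq_inner[of wstar] assms(1) by simp
  have wwr: "w \<bullet> w = r^2" using power2_norm_eq_inner[of w] r_def by simp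
  have rc: "w \<bullet> wstar = r*c" using c_eq r0 by simp
  have ip1: "wstar \<bullet> (w - wstar) = r*c - 1"
  proof -
    have "wstar \<bullet> (w - wstar) = wstar \<bullet> w - wstar \<bullet> wstar" by (rule inner_diff_right)
    also have "wstar \<bullet> w = w \<bullet> wstar" by (rule inner_commute)
    finally show ?thesis using rc ww by simp
  qed
  have ip2: "(w /\<^sub>R norm w) \<bullet> (w - wstar) = r - c"
  proof -
    have "(w /\<^sub>R norm w) \<bullet> (w - wstar) = (w /\<^sub>R norm w) \<bullet> w - c" unfolding c_def by (rule inner_diff_right)
    also have "(w /\<^sub>R norm w) \<bullet> w = (w \<bullet> w) / r" unfolding r_def by (simp add: divide_inverse mult.commute)
    also have "\<dots> = r" using wwr r0 by (simp add: power2_eq_square)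
    finally show ?thesis .
  qed
  have nd: "(norm (w - wstar))^2 = (r-c)^2 + s^2"
  proof -
    have "(norm (w - wstar))^2 = (w - wstar) \<bullet> (w - wstar)" by (rule power2_norm_eq_inner)
    also have "\<dots> = w \<bullet> w - 2 * (w \<bullet> wstar) + wstar \<bullet> wstar"
      by (simp add: inner_diff_left inner_diff_right inner_commute)
    also have "\<dots> = r^2 - 2*(r*c) + 1" using wwr rc ww by simp
    also have "\<dots> = (r-c)^2 + s^2" using s2 by (simp add: power2_eq_square algebra_simps)
    finally show ?thesis .
  qed
  have G: "relu_grad wstar w \<bullet> (w - wstar) = (1/2)*((r-c)^2 + s^2) + (1/(2*pi))*(T*(r*c-1) - s*(r-c))"
  proof -
    have "relu_grad wstar w = (1/2) *\<^sub>R (w - wstar) + (1 / (2*pi)) *\<^sub>R (T *\<^sub>R wstar - s *\<^sub>R (w /\<^sub>R norm w))"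
      unfolding relu_grad_def Let_def hT s_def ..
    hence "relu_grad wstar w \<bullet> (w - wstar) = (1/2) * ((w - wstar) \<bullet> (w - wstar))
        + (1 / (2*pi)) * (T * (wstar \<bullet> (w - wstar)) - s * ((w /\<^sub>R norm w) \<bullet> (w - wstar)))"
      by (simp only: inner_add_left inner_scaleR_left inner_diff_left)
    also have "(w - wstar) \<bullet> (w - wstar) = (r-c)^2 + s^2" using nd power2_norm_eq_inner[of "w - wstar"] by simp
    finally show ?thesis unfolding ip1 ip2 .
  qed
  have Y: "(1/(2*pi))*(T*(r*c-1) - s*(r-c)) \<ge> (1/(2*pi))*(-(0.8*pi*((r-c)^2 + s^2)))"
    using key pi_gt_zero by (intro mult_left_mono) auto
  have Z: "(1/(2*pi))*(-(0.8*pi*((r-c)^2 + s^2))) = -(0.4*((r-c)^2 + s^2))" using pi_gt_zero by simp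
  have X0: "(r-c)^2 + s^2 \<ge> 0" by simp
  show ?thesis unfolding G nd using Y Z X0 by linarith
qed

end
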